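(* Let $S$ be a numerical semigroup with minimal generators $a_1<a_2<\cdots<a_\nu$ ($\nu\ge 2$), multiplicity $\mu=a_1$ and conductor $c$, with $a_2>\frac{c+\mu}{3}$. Let $P=\{a_1,\dots,a_\nu\}$, $P_1=\{a\in P\setminus\{\mu\}: \tfrac13(c+\mu)<a<\tfrac12(c+\mu)\}$, $P_2=\{a\in P\setminus\{\mu\}: \tfrac12(c+\mu)\le a<\tfrac23(c+\mu)\}$, $q_i=|P_i|$, and let $\sigma$ be the maximal cardinality of an independent set of Apéry pairs. Then $$\frac{q_1(q_1+1)}{2}+\sigma\cdot\max\{q_1,q_2\}+\nu\ge\mu.$$
   Context: A numerical semigroup is a submonoid $S\subseteq\mathbb{N}$ with finite complement; $\nu$ is the number of minimal generators, $\mu$ the smallest one, $c$ the least integer with $c+\mathbb{N}\subseteq S$. $\mathrm{Ap}(S)=\{x\in S: x-\mu\notin S\}$. An Apéry pair is a pair $(a,b)\in P_1\times P_2$ with $a+b\in\mathrm{Ap}(S)$. A set $\{(a_i,b_i)\}_{i=1}^n$ of Apéry pairs is independent if $a_i\ne a_j$ and $b_i\ne b_j$ for all $i\ne j$. *)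

theory Defs
  imports Complex_Main
begin

definition numerical_semigroup :: "nat set \<Rightarrow> bool" where
  "numerical_semigroup S \<longleftrightarrow> 0 \<in> S \<and> (\<forall>x\<in>S. \<forall>y\<in>S. x + y \<in> S) \<and> finite (UNIV - S)"

definition min_gens :: "nat set \<Rightarrow> nat set" where
  "min_gens S = {a \<in> S. a \<noteq> 0 \<and> \<not> (\<exists>x\<in>S. \<exists>y\<in>S. x \<noteq> 0 \<and> y \<noteq> 0 \<and> a = x + y)}"

definition embdim :: "nat set \<Rightarrow> nat" where
  "embdim S = card (min_gens S)"

definition multiplicity_ns :: "nat set \<Rightarrow> nat" where
  "multiplicity_ns S = (LEAST x. x \<in> S \<and> x \<noteq> 0)"

definition conductor :: "nat set \<Rightarrow> nat" where
  "conductor S = (LEAST c. \<forall>n. c + n \<in> S)"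

definition apery :: "nat set \<Rightarrow> nat set" where
  "apery S = {x \<in> S. \<not> (multiplicity_ns S \<le> x \<and> x - multiplicity_ns S \<in> S)}"

definition P1 :: "nat set \<Rightarrow> nat set" where
  "P1 S = {a \<in> min_gens S - {multiplicity_ns S}.
      (real (conductor S) + real (multiplicity_ns S)) / 3 < real a \<and>
      real a < (real (conductor S) + real (multiplicity_ns S)) / 2}"

definition P2 :: "nat set \<Rightarrow> nat set" where
  "P2 S = {a \<in> min_gens S - {multiplicity_ns S}.
      (real (conductor S) + real (multiplicity_ns S)) / 2 \<le> real a \<and>
      real a < 2 * (real (conductor S) + real (multiplicity_ns S)) / 3}"

definition apery_pairs :: "nat set \<Rightarrow> (nat \<times> nat) set" where
  "apery_pairs S = {(a, b). a \<in> P1 S \<and> b \<in> P2 S \<and> a + b \<in> apery S}"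

definition independent_pairs :: "nat set \<Rightarrow> (nat \<times> nat) set \<Rightarrow> bool" where
  "independent_pairs S A \<longleftrightarrow> A \<subseteq> apery_pairs S \<and> inj_on fst A \<and> inj_on snd A"

definition sigma_ap :: "nat set \<Rightarrow> nat" where
  "sigma_ap S = Max {card A | A. independent_pairs S A}"

end

theory Submission
  imports Defs
begin

definition nbr :: "('a \<times> 'b) set \<Rightarrow> 'a set \<Rightarrow> 'b set" where
  "nbr E X = {b. \<exists>a\<in>X. (a,b) \<in> E}"

lemma nbr_finite: "finite E \<Longrightarrow> finite (nbr E X)"
proof -
  assume "finite E"
  moreover have "nbr E X \<subseteq> snd ` E" by (force simp: nbr_def)
  ultimately show ?thesis using finite_subset by blast
qed

lemma hall_defect:
  fixes E :: "('a \<times> 'b) set" and d :: int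
  assumes "finite A" "finite E" "E \<subseteq> A \<times> UNIV"
    "\<forall>X\<subseteq>A. int (card X) - d \<le> int (card (nbr E X))"
  shows "\<exists>M\<subseteq>E. inj_on fst M \<and> inj_on snd M \<and> int (card A) - d \<le> int (card M)"
  using assms
proof (induction "card A" arbitrary: A E d rule: less_induct)
  case less
  have d0: "0 \<le> d" using less.prems(4) by (auto simp: nbr_def)
  have fN: "\<And>X. finite (nbr E X)" using nbr_finite less.prems(2) by blast
  show ?case
  proof (cases "A = {}")
    case True
    then show ?thesis using d0 by (intro exI[of _ "{}"]) auto
  next
    case Ane: False
    show ?thesis
    proof (cases "\<exists>X. X \<subseteq> A \<and> X \<noteq> {} \<and> X \<noteq> A \<and> int (card (nbr E X)) \<le> int (card X) - d")
      case True
      then obtain X where X: "X \<subseteq> A" "X \<noteq> {}" "X \<noteq> A" "int (card (nbr E X)) \<le> int (card X) - d" by blast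
      define E1 where "E1 = E \<inter> (X \<times> UNIV)"
      have fX: "finite X" using X(1) less.prems(1) finite_subset by blast
      have cX: "card X < card A" using X(1,3) less.prems(1) by (meson psubsetI psubset_card_mono)
      have n1: "nbr E1 Y = nbr E Y" if "Y \<subseteq> X" for Y using that by (auto simp: nbr_def E1_def)
      have "\<exists>M\<subseteq>E1. inj_on fst M \<and> inj_on snd M \<and> int (card X) - d \<le> int (card M)"
      proof (rule less.hyps[OF cX fX])
        show "finite E1" using less.prems(2) by (simp add: E1_def)
        show "E1 \<subseteq> X \<times> UNIV" by (auto simp: E1_def)
        show "\<forall>Y\<subseteq>X. int (card Y) - d \<le> int (card (nbr E1 Y))"
          using n1 less.prems(4) X(1) by auto
      qed
      then obtain M1 where M1: "M1 \<subseteq> E1" "inj_on fst M1" "inj_on snd M1" "int (card X) - d \<le> int (card M1)" by blast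
      define E2 where "E2 = E \<inter> ((A - X) \<times> (UNIV - nbr E X))"
      have fAX: "finite (A - X)" using less.prems(1) by blast
      have cAX: "card (A - X) < card A" using X(1,2) less.prems(1)
        by (metis Diff_subset card_seteq double_diff empty_subsetI order_le_less subset_refl Diff_empty psubset_card_mono Diff_Diff_Int Int_absorb2 psubsetI)
      have n2: "nbr E2 Y = nbr E Y - nbr E X" if "Y \<subseteq> A - X" for Y
        using that by (auto simp: nbr_def E2_def)
      have "\<exists>M\<subseteq>E2. inj_on fst M \<and> inj_on snd M \<and> int (card (A - X)) - 0 \<le> int (card M)"
      proof (rule less.hyps[OF cAX fAX])
        show "finite E2" using less.prems(2) by (simp add: E2_def)
        show "E2 \<subseteq> (A - X) \<times> UNIV" by (auto simp: E2_def)
        show "\<forall>Y\<subseteq>A - X. int (card Y) - 0 \<le> int (card (nbr E2 Y))"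
        proof (intro allI impI)
          fix Y assume Y: "Y \<subseteq> A - X"
          have fY: "finite Y" using Y fAX finite_subset by blast
          have un: "nbr E (Y \<union> X) = (nbr E Y - nbr E X) \<union> nbr E X" by (auto simp: nbr_def)
          have c1: "card (nbr E (Y \<union> X)) = card (nbr E Y - nbr E X) + card (nbr E X)"
            unfolding un by (rule card_Un_disjoint) (use fN in auto)
          have c2: "card (Y \<union> X) = card Y + card X"
            by (rule card_Un_disjoint) (use fY fX Y in auto)
          have "int (card (Y \<union> X)) - d \<le> int (card (nbr E (Y \<union> X)))"
            using less.prems(4) Y X(1) by (meson Diff_subset le_sup_iff order_trans)
          then show "int (card Y) - 0 \<le> int (card (nbr E2 Y))"
            using c1 c2 X(4) n2[OF Y] by simp
        qed
      qed
      then obtain M2 where M2: "M2 \<subseteq> E2" "inj_on fst M2" "inj_on snd M2" "int (card (A - X)) \<le> int (card M2)" by auto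
      have f1: "fst ` M1 \<subseteq> X" using M1(1) by (auto simp: E1_def)
      have f2: "fst ` M2 \<subseteq> A - X" using M2(1) by (auto simp: E2_def)
      have s1: "snd ` M1 \<subseteq> nbr E X" using M1(1) by (force simp: E1_def nbr_def)
      have s2: "snd ` M2 \<subseteq> - nbr E X" using M2(1) by (auto simp: E2_def)
      have fM1: "finite M1" using M1(1) less.prems(2) finite_subset unfolding E1_def by blast
      have fM2: "finite M2" using M2(1) less.prems(2) finite_subset unfolding E2_def by blast
      have disj: "M1 \<inter> M2 = {}" using f1 f2 by force
      have "inj_on fst (M1 \<union> M2)" using M1(2) M2(2) f1 f2 by (auto simp: inj_on_Un)
      moreover have "inj_on snd (M1 \<union> M2)" using M1(3) M2(3) s1 s2 by (auto simp: inj_on_Un)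
      moreover have "card (M1 \<union> M2) = card M1 + card M2" using fM1 fM2 disj card_Un_disjoint by blast
      moreover have "card A = card X + card (A - X)" using X(1) less.prems(1)
        by (metis card_Diff_subset fX card_mono le_add_diff_inverse)
      moreover have "M1 \<union> M2 \<subseteq> E" using M1(1) M2(1) by (auto simp: E1_def E2_def)
      ultimately show ?thesis using M1(4) M2(4) by (intro exI[of _ "M1 \<union> M2"]) auto
    next
      case False
      obtain a where a: "a \<in> A" using Ane by blast
      show ?thesis
      proof (cases "nbr E {a} = {}")
        case True
        have "int (card {a}) - d \<le> int (card (nbr E {a}))" using less.prems(4) a by blast
        hence d1: "1 - d \<le> 0" using True by simp
        have fA': "finite (A - {a})" using less.prems(1) by blast
        have cA': "card (A - {a}) < card A" using a less.prems(1) by (meson card_Diff1_less)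
        have "\<exists>M\<subseteq>E. inj_on fst M \<and> inj_on snd M \<and> int (card (A - {a})) - (d - 1) \<le> int (card M)"
        proof (rule less.hyps[OF cA' fA'])
          show "finite E" using less.prems(2) .
          show "E \<subseteq> (A - {a}) \<times> UNIV" using less.prems(3) True by (auto simp: nbr_def)
          show "\<forall>Y\<subseteq>A - {a}. int (card Y) - (d - 1) \<le> int (card (nbr E Y))"
          proof (intro allI impI)
            fix Y assume Y: "Y \<subseteq> A - {a}"
            show "int (card Y) - (d - 1) \<le> int (card (nbr E Y))"
            proof (cases "Y = {}")
              case True then show ?thesis using d1 by simp
            next
              case Yne: False
              have "Y \<noteq> A" using Y a by blast
              hence "int (card Y) - d < int (card (nbr E Y))" using False Yne Y by auto
              then show ?thesis by simp
            qed
          qed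
        qed
        then obtain M where M: "M \<subseteq> E" "inj_on fst M" "inj_on snd M" "int (card (A - {a})) - (d - 1) \<le> int (card M)" by blast
        have "card (A - {a}) = card A - 1" using a less.prems(1) by simp
        moreover have "card A \<ge> 1" using a less.prems(1) by (metis One_nat_def Suc_leI card_gt_0_iff empty_iff)
        ultimately show ?thesis using M by (intro exI[of _ M]) auto
      next
        case nb: False
        then obtain b where ab: "(a,b) \<in> E" by (auto simp: nbr_def)
        define E' where "E' = E \<inter> ((A - {a}) \<times> (UNIV - {b}))"
        have fA': "finite (A - {a})" using less.prems(1) by blast
        have cA': "card (A - {a}) < card A" using a less.prems(1) by (meson card_Diff1_less)
        have n': "nbr E' X = nbr E X - {b}" if "X \<subseteq> A - {a}" for X
          using that by (auto simp: nbr_def E'_def)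
        have "\<exists>M\<subseteq>E'. inj_on fst M \<and> inj_on snd M \<and> int (card (A - {a})) - d \<le> int (card M)"
        proof (rule less.hyps[OF cA' fA'])
          show "finite E'" using less.prems(2) by (simp add: E'_def)
          show "E' \<subseteq> (A - {a}) \<times> UNIV" by (auto simp: E'_def)
          show "\<forall>Y\<subseteq>A - {a}. int (card Y) - d \<le> int (card (nbr E' Y))"
          proof (intro allI impI)
            fix Y assume Y: "Y \<subseteq> A - {a}"
            show "int (card Y) - d \<le> int (card (nbr E' Y))"
            proof (cases "Y = {}")
              case True then show ?thesis using d0 by simp
            next
              case Yne: False
              have "Y \<noteq> A" using Y a by blast
              hence gt: "int (card Y) - d < int (card (nbr E Y))" using False Yne Y by auto
              have "int (card (nbr E Y)) - 1 \<le> int (card (nbr E Y - {b}))"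
                using fN[of Y] by (cases "b \<in> nbr E Y") auto
              then show ?thesis using gt n'[OF Y] by simp
            qed
          qed
        qed
        then obtain M' where M': "M' \<subseteq> E'" "inj_on fst M'" "inj_on snd M'" "int (card (A - {a})) - d \<le> int (card M')" by blast
        have fM': "finite M'" using M'(1) less.prems(2) finite_subset unfolding E'_def by blast
        have nf: "a \<notin> fst ` M'" using M'(1) by (auto simp: E'_def)
        have ns: "b \<notin> snd ` M'" using M'(1) by (auto simp: E'_def)
        have nin: "(a,b) \<notin> M'" using nf by force
        have "inj_on fst (insert (a,b) M')" using M'(2) nf by auto
        moreover have "inj_on snd (insert (a,b) M')" using M'(3) ns by auto
        moreover have "card (insert (a,b) M') = card M' + 1" using fM' nin by simp
        moreover have "card (A - {a}) = card A - 1" using a less.prems(1) by simp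
        moreover have "card A \<ge> 1" using a less.prems(1) by (metis One_nat_def Suc_leI card_gt_0_iff empty_iff)
        moreover have "insert (a,b) M' \<subseteq> E" using ab M'(1) by (auto simp: E'_def)
        ultimately show ?thesis using M'(4) by (intro exI[of _ "insert (a,b) M'"]) auto
      qed
    qed
  qed
qed


lemma edges_bound:
  fixes E :: "('a \<times> 'b) set"
  assumes fA: "finite A" and fB: "finite B" and EAB: "E \<subseteq> A \<times> B"
  shows "\<exists>M\<subseteq>E. inj_on fst M \<and> inj_on snd M \<and> card E \<le> card M * max (card A) (card B)"
proof -
  define D where "D = (\<lambda>X. int (card X) - int (card (nbr E X)))"
  define m where "m = Max (D ` Pow A)"
  have fP: "finite (D ` Pow A)" using fA by simp
  have "m \<in> D ` Pow A" unfolding m_def using fP by (intro Max_in) auto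
  then obtain X0 where X0: "X0 \<subseteq> A" "D X0 = m" by auto
  have mx: "D X \<le> m" if "X \<subseteq> A" for X unfolding m_def using fP that by (intro Max_ge) auto
  have fE: "finite E" using finite_subset[OF EAB] fA fB by blast
  have "\<exists>M\<subseteq>E. inj_on fst M \<and> inj_on snd M \<and> int (card A) - D X0 \<le> int (card M)"
  proof (rule hall_defect[OF fA fE])
    show "E \<subseteq> A \<times> UNIV" using EAB by auto
    show "\<forall>X\<subseteq>A. int (card X) - D X0 \<le> int (card (nbr E X))"
    proof (intro allI impI)
      fix X assume "X \<subseteq> A"
      hence "D X \<le> D X0" using mx X0(2) by simp
      thus "int (card X) - D X0 \<le> int (card (nbr E X))" by (simp add: D_def)
    qed
  qed
  then obtain M where M: "M \<subseteq> E" "inj_on fst M" "inj_on snd M" "int (card A) - D X0 \<le> int (card M)" by blast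
  have NB: "nbr E X0 \<subseteq> B" using EAB by (auto simp: nbr_def)
  have fN: "finite (nbr E X0)" using NB fB finite_subset by blast
  have cover: "E \<subseteq> ((A - X0) \<times> B) \<union> (A \<times> nbr E X0)" using EAB by (auto simp: nbr_def)
  have "card E \<le> card (((A - X0) \<times> B) \<union> (A \<times> nbr E X0))"
    by (rule card_mono[OF _ cover]) (use fA fB fN in auto)
  also have "\<dots> \<le> card ((A - X0) \<times> B) + card (A \<times> nbr E X0)" by (rule card_Un_le)
  also have "\<dots> = card (A - X0) * card B + card A * card (nbr E X0)" by (simp add: card_cartesian_product)
  also have "\<dots> \<le> card (A - X0) * max (card A) (card B) + max (card A) (card B) * card (nbr E X0)"
    by (intro add_mono mult_le_mono) auto
  also have "\<dots> = (card (A - X0) + card (nbr E X0)) * max (card A) (card B)" by (simp add: algebra_simps)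
  also have "\<dots> \<le> card M * max (card A) (card B)"
  proof (rule mult_le_mono1)
    have "card (A - X0) = card A - card X0" using X0(1) fA by (meson card_Diff_subset finite_subset)
    moreover have "card X0 \<le> card A" using X0(1) fA card_mono by blast
    ultimately show "card (A - X0) + card (nbr E X0) \<le> card M" using M(4) by (simp add: D_def)
  qed
  finally show ?thesis using M by blast
qed

lemma sumset_card:
  fixes T :: "nat set"
  assumes "finite T"
  shows "2 * card {x + y | x y. x \<in> T \<and> y \<in> T} \<le> card T * (card T + 1)"
  using assms
proof (induction T rule: finite_induct)
  case empty then show ?case by simp
next
  case (insert t T)
  have eq: "{x + y | x y. x \<in> insert t T \<and> y \<in> insert t T} =
     {x + y | x y. x \<in> T \<and> y \<in> T} \<union> ((\<lambda>y. t + y) ` insert t T)" by auto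
  have f1: "finite {x + y | x y. x \<in> T \<and> y \<in> T}"
  proof -
    have "{x + y | x y. x \<in> T \<and> y \<in> T} = (\<lambda>(x,y). x + y) ` (T \<times> T)" by auto
    thus ?thesis using insert(1) by simp
  qed
  have "card {x + y | x y. x \<in> insert t T \<and> y \<in> insert t T} \<le>
     card {x + y | x y. x \<in> T \<and> y \<in> T} + card ((\<lambda>y. t + y) ` insert t T)"
    unfolding eq by (rule card_Un_le)
  also have "card ((\<lambda>y. t + y) ` insert t T) \<le> card (insert t T)" by (rule card_image_le) (use insert(1) in simp)
  finally show ?case using insert by simp
qed



lemma P1_iff: "a \<in> P1 S \<longleftrightarrow> a \<in> min_gens S \<and> a \<noteq> multiplicity_ns S \<and>
   conductor S + multiplicity_ns S < 3 * a \<and> 2 * a < conductor S + multiplicity_ns S"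
proof -
  have e1: "(real (conductor S) + real (multiplicity_ns S)) / 3 < real a \<longleftrightarrow> conductor S + multiplicity_ns S < 3 * a"
    by (simp add: field_simps flip: of_nat_add of_nat_mult) linarith
  have e2: "real a < (real (conductor S) + real (multiplicity_ns S)) / 2 \<longleftrightarrow> 2 * a < conductor S + multiplicity_ns S"
    by (simp add: field_simps flip: of_nat_add of_nat_mult) linarith
  show ?thesis unfolding P1_def using e1 e2 by auto
qed

lemma P2_iff: "a \<in> P2 S \<longleftrightarrow> a \<in> min_gens S \<and> a \<noteq> multiplicity_ns S \<and>
   conductor S + multiplicity_ns S \<le> 2 * a \<and> 3 * a < 2 * (conductor S + multiplicity_ns S)"
proof -
  have e1: "(real (conductor S) + real (multiplicity_ns S)) / 2 \<le> real a \<longleftrightarrow> conductor S + multiplicity_ns S \<le> 2 * a"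
    by (simp add: field_simps flip: of_nat_add of_nat_mult) linarith
  have e2': "real a < 2 * (real (conductor S) + real (multiplicity_ns S)) / 3 \<longleftrightarrow> real (3 * a) < real (2 * (conductor S + multiplicity_ns S))"
    by (simp add: field_simps)
  have e2: "real a < 2 * (real (conductor S) + real (multiplicity_ns S)) / 3 \<longleftrightarrow> 3 * a < 2 * (conductor S + multiplicity_ns S)"
    unfolding e2' of_nat_less_iff ..
  show ?thesis unfolding P2_def using e1 e2 by auto
qed

theorem corollary4p2:
  fixes S :: "nat set"
  assumes "numerical_semigroup S"
    and "embdim S \<ge> 2"
    and "(real (conductor S) + real (multiplicity_ns S)) / 3
           < real (Min (min_gens S - {multiplicity_ns S}))"
  shows "real (card (P1 S)) * (real (card (P1 S)) + 1) / 2
         + real (sigma_ap S) * real (max (card (P1 S)) (card (P2 S)))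
         + real (embdim S) \<ge> real (multiplicity_ns S)"
proof -
  define m where "m = multiplicity_ns S"
  define c where "c = conductor S"
  define G where "G = min_gens S"
  define g0 where "g0 = Min (G - {m})"
  have S0: "0 \<in> S" and Sadd: "\<And>x y. x \<in> S \<Longrightarrow> y \<in> S \<Longrightarrow> x + y \<in> S"
    and fin: "finite (UNIV - S)" using assms(1) unfolding numerical_semigroup_def by auto
  obtain k where k: "\<forall>x\<in>UNIV - S. x < k" using fin finite_nat_set_iff_bounded by blast
  have kS: "\<forall>n. k + n \<in> S" using k by force
  have cond: "\<forall>n. c + n \<in> S" unfolding c_def conductor_def by (rule LeastI_ex) (use kS in blast)
  have "k + 1 \<in> S" using kS by blast
  hence ex0: "\<exists>x. x \<in> S \<and> x \<noteq> 0" by (intro exI[of _ "k + 1"]) simp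
  have mS: "m \<in> S \<and> m \<noteq> 0" unfolding m_def multiplicity_ns_def by (rule LeastI_ex) (use ex0 in blast)
  have mle: "\<And>x. x \<in> S \<Longrightarrow> x \<noteq> 0 \<Longrightarrow> m \<le> x" unfolding m_def multiplicity_ns_def
    by (simp add: Least_le)
  have fG: "finite G" using assms(2) unfolding embdim_def G_def by (metis card.infinite not_numeral_le_zero)
  have GS: "G \<subseteq> S" unfolding G_def min_gens_def by auto
  have mG: "m \<in> G"
  proof -
    have "\<not> (\<exists>x\<in>S. \<exists>y\<in>S. x \<noteq> 0 \<and> y \<noteq> 0 \<and> m = x + y)"
    proof
      assume "\<exists>x\<in>S. \<exists>y\<in>S. x \<noteq> 0 \<and> y \<noteq> 0 \<and> m = x + y"
      then obtain x y where "x \<in> S" "y \<in> S" "x \<noteq> 0" "y \<noteq> 0" "m = x + y" by blast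
      thus False using mle[of x] by simp
    qed
    thus ?thesis using mS unfolding G_def min_gens_def by auto
  qed
  have Gm_ne: "G - {m} \<noteq> {}"
  proof
    assume "G - {m} = {}"
    hence "G \<subseteq> {m}" by blast
    hence "card G \<le> 1" using card_mono[of "{m}" G] by simp
    thus False using assms(2) unfolding embdim_def G_def by simp
  qed
  have g0le: "\<And>a. a \<in> G - {m} \<Longrightarrow> g0 \<le> a" unfolding g0_def using fG by (intro Min_le) auto
  have g0c: "c + m < 3 * g0"
  proof -
    have "(real c + real m) / 3 < real g0" using assms(3) by (simp add: c_def m_def g0_def G_def)
    hence "real (c + m) < real (3 * g0)" by simp
    thus ?thesis by linarith
  qed
  have apS: "\<And>w. w \<in> apery S \<Longrightarrow> w \<in> S" unfolding apery_def by auto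
  have apI: "\<And>w. w \<in> S \<Longrightarrow> \<not> (m \<le> w \<and> w - m \<in> S) \<Longrightarrow> w \<in> apery S"
    unfolding apery_def m_def by auto
  have apD: "\<And>w. w \<in> apery S \<Longrightarrow> \<not> (m \<le> w \<and> w - m \<in> S)"
    unfolding apery_def m_def by auto
  have apbound: "\<And>w. w \<in> apery S \<Longrightarrow> w < c + m"
  proof -
    fix w assume w: "w \<in> apery S"
    show "w < c + m"
    proof (rule ccontr)
      assume "\<not> w < c + m"
      hence "w - m = c + (w - m - c)" "m \<le> w" by auto
      hence "m \<le> w \<and> w - m \<in> S" using cond by metis
      thus False using apD[OF w] by blast
    qed
  qed
  have apsplit: "\<And>w x y. w \<in> apery S \<Longrightarrow> x \<in> S \<Longrightarrow> y \<in> S \<Longrightarrow> w = x + y \<Longrightarrow> x \<in> apery S"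
  proof -
    fix w x y assume w: "w \<in> apery S" and xy: "x \<in> S" "y \<in> S" "w = x + y"
    show "x \<in> apery S"
    proof (rule apI[OF xy(1)])
      show "\<not> (m \<le> x \<and> x - m \<in> S)"
      proof
        assume "m \<le> x \<and> x - m \<in> S"
        hence "m \<le> w \<and> w - m \<in> S" using Sadd[of "x - m" y] xy by auto
        thus False using apD[OF w] by blast
      qed
    qed
  qed
  have mnap: "m \<notin> apery S"
  proof
    assume "m \<in> apery S"
    hence "\<not> (m \<le> m \<and> m - m \<in> S)" by (rule apD)
    thus False using S0 by simp
  qed
  have apnotG: "\<And>w. w \<in> apery S \<Longrightarrow> w \<noteq> 0 \<Longrightarrow> w \<notin> G \<Longrightarrow>
      \<exists>x y. x \<in> apery S \<and> y \<in> apery S \<and> x \<noteq> 0 \<and> y \<noteq> 0 \<and> w = x + y"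
  proof -
    fix w assume w: "w \<in> apery S" "w \<noteq> 0" "w \<notin> G"
    then obtain x y where xy: "x \<in> S" "y \<in> S" "x \<noteq> 0" "y \<noteq> 0" "w = x + y"
      using apS[OF w(1)] unfolding G_def min_gens_def by blast
    have "x \<in> apery S" using apsplit[OF w(1) xy(1,2) xy(5)] .
    moreover have "y \<in> apery S" using apsplit[OF w(1) xy(2,1)] xy(5) by simp
    ultimately show "\<exists>x y. x \<in> apery S \<and> y \<in> apery S \<and> x \<noteq> 0 \<and> y \<noteq> 0 \<and> w = x + y" using xy by blast
  qed
  have apGm: "\<And>w. w \<in> apery S \<Longrightarrow> w \<in> G \<Longrightarrow> w \<in> G - {m}" using mnap by blast
  have apge: "\<And>w. w \<in> apery S \<Longrightarrow> w \<noteq> 0 \<Longrightarrow> g0 \<le> w"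
  proof -
    fix w show "w \<in> apery S \<Longrightarrow> w \<noteq> 0 \<Longrightarrow> g0 \<le> w"
    proof (induction w rule: less_induct)
      case (less w)
      show ?case
      proof (cases "w \<in> G")
        case True then show ?thesis using g0le apGm less.prems by blast
      next
        case False
        then obtain x y where "x \<in> apery S" "y \<in> apery S" "x \<noteq> 0" "y \<noteq> 0" "w = x + y"
          using apnotG less.prems by blast
        thus ?thesis using less.IH[of x] by simp
      qed
    qed
  qed
  define SS where "SS = {x + y | x y. x \<in> P1 S \<and> y \<in> P1 S}"
  define EE where "EE = apery_pairs S"
  have decomp: "\<And>w. w \<in> apery S \<Longrightarrow> w \<noteq> 0 \<Longrightarrow> w \<in> G - {m} \<or> w \<in> SS \<or> w \<in> (\<lambda>(a,b). a + b) ` EE"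
  proof -
    fix w assume w: "w \<in> apery S" "w \<noteq> 0"
    show "w \<in> G - {m} \<or> w \<in> SS \<or> w \<in> (\<lambda>(a,b). a + b) ` EE"
    proof (cases "w \<in> G")
      case True then show ?thesis using apGm w by blast
    next
      case False
      then obtain x y where xy: "x \<in> apery S" "y \<in> apery S" "x \<noteq> 0" "y \<noteq> 0" "w = x + y"
        using apnotG w by blast
      have wb: "w < c + m" using apbound w(1) .
      have xG: "x \<in> G - {m}"
      proof (rule ccontr)
        assume "x \<notin> G - {m}"
        hence "x \<notin> G" using apGm xy(1) by blast
        then obtain x1 x2 where "x1 \<in> apery S" "x2 \<in> apery S" "x1 \<noteq> 0" "x2 \<noteq> 0" "x = x1 + x2"
          using apnotG xy(1,3) by blast
        hence "3 * g0 \<le> w" using apge[of x1] apge[of x2] apge[OF xy(2,4)] xy(5) by simp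
        thus False using wb g0c by simp
      qed
      have yG: "y \<in> G - {m}"
      proof (rule ccontr)
        assume "y \<notin> G - {m}"
        hence "y \<notin> G" using apGm xy(2) by blast
        then obtain x1 x2 where "x1 \<in> apery S" "x2 \<in> apery S" "x1 \<noteq> 0" "x2 \<noteq> 0" "y = x1 + x2"
          using apnotG xy(2,4) by blast
        hence "3 * g0 \<le> w" using apge[of x1] apge[of x2] apge[OF xy(1,3)] xy(5) by simp
        thus False using wb g0c by simp
      qed
      have gx: "g0 \<le> x" "g0 \<le> y" using g0le xG yG by auto
      have key: "\<And>a b. a \<in> G - {m} \<Longrightarrow> b \<in> G - {m} \<Longrightarrow> a \<le> b \<Longrightarrow> g0 \<le> a \<Longrightarrow> g0 \<le> b \<Longrightarrow> a + b = w \<Longrightarrow>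
           w \<in> SS \<or> w \<in> (\<lambda>(a,b). a + b) ` EE"
      proof -
        fix a b assume ab: "a \<in> G - {m}" "b \<in> G - {m}" "a \<le> b" "g0 \<le> a" "g0 \<le> b" "a + b = w"
        have aP1: "a \<in> P1 S" unfolding P1_iff using ab wb g0c by (simp add: G_def m_def c_def)
        show "w \<in> SS \<or> w \<in> (\<lambda>(a,b). a + b) ` EE"
        proof (cases "2 * b < c + m")
          case True
          hence "b \<in> P1 S" unfolding P1_iff using ab wb g0c by (simp add: G_def m_def c_def)
          thus ?thesis using aP1 ab(6) unfolding SS_def by blast
        next
          case False
          hence "b \<in> P2 S" unfolding P2_iff using ab wb g0c by (simp add: G_def m_def c_def)
          hence "(a, b) \<in> EE" using aP1 ab(6) w(1) unfolding EE_def apery_pairs_def by simp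
          thus ?thesis using ab(6) by force
        qed
      qed
      show ?thesis
      proof (cases "x \<le> y")
        case True then show ?thesis using key[OF xG yG True gx] xy(5) by simp
      next
        case False then show ?thesis using key[OF yG xG _ gx(2) gx(1)] xy(5) by simp
      qed
    qed
  qed
  have fP1: "finite (P1 S)" using fG unfolding P1_def G_def by simp
  have fP2: "finite (P2 S)" using fG unfolding P2_def G_def by simp
  have EEsub: "EE \<subseteq> P1 S \<times> P2 S" unfolding EE_def apery_pairs_def by auto
  have fEE: "finite EE" using EEsub fP1 fP2 finite_subset by blast
  have fSS: "finite SS"
  proof -
    have "SS = (\<lambda>(x,y). x + y) ` (P1 S \<times> P1 S)" unfolding SS_def by auto
    thus ?thesis using fP1 by simp
  qed
  have apsub: "apery S \<subseteq> {0} \<union> (G - {m}) \<union> SS \<union> (\<lambda>(a,b). a + b) ` EE" using decomp by blast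
  have fap: "finite (apery S)" using apsub fG fSS fEE finite_subset by blast
  have "card (apery S) \<le> card ({0} \<union> (G - {m}) \<union> SS \<union> (\<lambda>(a,b). a + b) ` EE)"
    by (rule card_mono[OF _ apsub]) (use fG fSS fEE in auto)
  also have "\<dots> \<le> card ({0} \<union> (G - {m}) \<union> SS) + card ((\<lambda>(a,b). a + b) ` EE)" by (rule card_Un_le)
  also have "\<dots> \<le> card ({0} \<union> (G - {m})) + card SS + card ((\<lambda>(a,b). a + b) ` EE)" using card_Un_le[of "{0} \<union> (G - {m})" SS] by simp
  also have "\<dots> \<le> 1 + card (G - {m}) + card SS + card EE"
    using card_Un_le[of "{0}" "G - {m}"] card_image_le[OF fEE, of "\<lambda>(a,b). a + b"] by simp
  finally have "card (apery S) \<le> 1 + card (G - {m}) + card SS + card EE" .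
  hence capb: "card (apery S) \<le> card G + card SS + card EE"
  proof -
    have "card (G - {m}) = card G - 1" using card_Diff_singleton[OF mG] .
    moreover have "card G \<ge> 1" using assms(2) unfolding embdim_def G_def by simp
    ultimately show ?thesis using \<open>card (apery S) \<le> 1 + card (G - {m}) + card SS + card EE\<close> by simp
  qed
  have mcap: "m \<le> card (apery S)"
  proof -
    have "{0..<m} \<subseteq> (\<lambda>w. w mod m) ` apery S"
    proof
      fix r assume r: "r \<in> {0..<m}"
      define P where "P = (\<lambda>n. n \<in> S \<and> n mod m = r)"
      have exP: "\<exists>n. P n"
      proof
        have "c \<le> c * m" using mS by simp
        hence "c + (c * m + r - c) = c * m + r" by linarith
        hence "c * m + r \<in> S" using cond by metis
        thus "P (c * m + r)" using r unfolding P_def by simp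
      qed
      define w where "w = (LEAST n. P n)"
      have Pw: "P w" unfolding w_def by (rule LeastI_ex[OF exP])
      have "w \<in> apery S"
      proof (rule apI)
        show "w \<in> S" using Pw P_def by simp
        show "\<not> (m \<le> w \<and> w - m \<in> S)"
        proof
          assume a: "m \<le> w \<and> w - m \<in> S"
          hence "(w - m) mod m = r" using Pw unfolding P_def by (metis le_mod_geq)
          hence "P (w - m)" using a P_def by simp
          hence "w \<le> w - m" unfolding w_def by (rule Least_le)
          thus False using a mS by (metis diff_less leD le_neq_implies_less not_gr_zero zero_le)
        qed
      qed
      moreover have "r = w mod m" using Pw P_def by simp
      ultimately show "r \<in> (\<lambda>w. w mod m) ` apery S" by blast
    qed
    hence "card {0..<m} \<le> card ((\<lambda>w. w mod m) ` apery S)" by (rule card_mono[rotated]) (use fap in simp)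
    also have "\<dots> \<le> card (apery S)" by (rule card_image_le[OF fap])
    finally show ?thesis by simp
  qed
  obtain M where M: "M \<subseteq> EE" "inj_on fst M" "inj_on snd M" "card EE \<le> card M * max (card (P1 S)) (card (P2 S))"
    using edges_bound[OF fP1 fP2 EEsub] by blast
  have "independent_pairs S M" using M unfolding independent_pairs_def EE_def by simp
  moreover have "finite {card A | A. independent_pairs S A}"
  proof (rule finite_subset[of _ "{..card EE}"])
    show "{card A | A. independent_pairs S A} \<subseteq> {..card EE}"
    proof
      fix x assume "x \<in> {card A | A. independent_pairs S A}"
      then obtain A where "x = card A" "A \<subseteq> EE" unfolding independent_pairs_def EE_def by blast
      thus "x \<in> {..card EE}" using card_mono[OF fEE] by simp
    qed
  qed simp
  ultimately have "card M \<le> sigma_ap S" unfolding sigma_ap_def by (intro Max_ge) auto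
  hence EEb: "card EE \<le> sigma_ap S * max (card (P1 S)) (card (P2 S))"
    using M(4) mult_le_mono1 order_trans by blast
  have SSb: "2 * card SS \<le> card (P1 S) * (card (P1 S) + 1)" unfolding SS_def by (rule sumset_card[OF fP1])
  have tot: "m \<le> card G + card SS + card EE" using mcap capb by simp
  have "real m \<le> real (card G) + real (card SS) + real (card EE)" using tot by linarith
  moreover have "real (card SS) \<le> real (card (P1 S)) * (real (card (P1 S)) + 1) / 2"
  proof -
    have "real (2 * card SS) \<le> real (card (P1 S) * (card (P1 S) + 1))" using SSb by (simp only: of_nat_le_iff)
    thus ?thesis by (simp add: algebra_simps)
  qed
  moreover have "real (card EE) \<le> real (sigma_ap S) * real (max (card (P1 S)) (card (P2 S)))"
  proof -
    have "real (card EE) \<le> real (sigma_ap S * max (card (P1 S)) (card (P2 S)))" using EEb by (simp only: of_nat_le_iff)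
    thus ?thesis by simp
  qed
  ultimately show ?thesis unfolding m_def G_def embdim_def by linarith
qed


end
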